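(* Let $k$ be a field and $w\in k(X)$ a non-constant rational function, viewed as a morphism $w\colon\mathbb{P}^1\to\mathbb{P}^1$, such that $k(X)/k(w)$ is separable and all ramification of $w$ is tame. Assume that $w$ has a pole of order at least $2$ at $\infty$ and that all other poles of $w$ over $\bar k$ are simple. Assume further that the numerator $g\in k[X]$ of the derivative $w'$ (written in lowest terms) is irreducible in $k[X]$ or the square of an irreducible polynomial in $k[X]$. Then $w$ is indecomposable over $k$, i.e. there are no $u,v\in k(X)$ with $\deg u>1$, $\deg v>1$ and $w=v\circ u$.
   Context: Ramification of $w$ at a point is tame if the ramification index there is not divisible by $\mathrm{char}(k)$. The degree of a rational function $u=a/b$ in lowest terms is $\max\{\deg a,\deg b\}$. *)

theory Defs
  imports "HOL-Computational_Algebra.Computational_Algebra" "HOL-Algebra.Algebraic_Closure_Type"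
begin

text \<open>A rational function in k(X) is represented by a pair (a, b) of polynomials,
  b nonzero; "in lowest terms" means coprime a b. Its degree:\<close>
definition rf_deg :: "'a::field poly \<Rightarrow> 'a poly \<Rightarrow> nat" where
  "rf_deg a b = max (degree a) (degree b)"

definition rf :: "'a::field poly \<Rightarrow> 'a poly \<Rightarrow> 'a poly fract" where
  "rf a b = Fract a b"

definition kconst :: "'a::field \<Rightarrow> 'a poly fract" where
  "kconst x = to_fract [:x:]"

definition peval :: "'a::field poly \<Rightarrow> 'a poly fract \<Rightarrow> 'a poly fract" where
  "peval c u = poly (map_poly kconst c) u"

definition rf_comp :: "'a::field poly \<Rightarrow> 'a poly \<Rightarrow> 'a poly \<Rightarrow> 'a poly \<Rightarrow> 'a poly fract" where
  "rf_comp c d a b = peval c (rf a b) / peval d (rf a b)"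

text \<open>Separability of k(X)/k(w), w = p/q: X is a root of
  Phi(T) = p(T) - w q(T) in k(w)[T], which is (up to a scalar) the minimal polynomial of X
  over k(w); the extension is separable iff this polynomial is separable, i.e. coprime to
  its derivative (coprimality does not change when passing from k(w)[T] to k(X)[T]).\<close>
definition min_poly_X :: "'a::field poly \<Rightarrow> 'a poly \<Rightarrow> 'a poly fract poly" where
  "min_poly_X p q = map_poly kconst p - smult (rf p q) (map_poly kconst q)"

definition rf_separable :: "'a::field poly \<Rightarrow> 'a poly \<Rightarrow> bool" where
  "rf_separable p q \<longleftrightarrow> coprime (min_poly_X p q) (pderiv (min_poly_X p q))"

text \<open>Ramification index of w = P/Q (lowest terms, over the algebraic closure) at a finite
  point alpha: pole order if Q(alpha) = 0, otherwise the order of vanishing of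
  w - w(alpha) at alpha.\<close>
definition ram_fin :: "'b::field poly \<Rightarrow> 'b poly \<Rightarrow> 'b \<Rightarrow> nat" where
  "ram_fin P Q \<alpha> =
     (if poly Q \<alpha> = 0 then order \<alpha> Q
      else order \<alpha> (smult (poly Q \<alpha>) P - smult (poly P \<alpha>) Q))"

definition ram_inf :: "'b::field poly \<Rightarrow> 'b poly \<Rightarrow> nat" where
  "ram_inf P Q =
     (if degree P > degree Q then degree P - degree Q
      else if degree P < degree Q then degree Q - degree P
      else degree Q - degree (smult (lead_coeff Q) P - smult (lead_coeff P) Q))"

definition tame :: "'a::field poly \<Rightarrow> 'a poly \<Rightarrow> bool" where
  "tame p q \<longleftrightarrow>
     (\<forall>\<alpha>::'a alg_closure. \<not> CHAR('a) dvd ram_fin (map_poly to_ac p) (map_poly to_ac q) \<alpha>)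
     \<and> \<not> CHAR('a) dvd ram_inf p q"

text \<open>g is a numerator of w' = (p'q - pq')/q^2 written in lowest terms.\<close>
definition deriv_numerator :: "'a::field poly \<Rightarrow> 'a poly \<Rightarrow> 'a poly \<Rightarrow> bool" where
  "deriv_numerator p q g \<longleftrightarrow>
     (\<exists>h. h \<noteq> 0 \<and> coprime g h \<and> g * q ^ 2 = h * (pderiv p * q - p * pderiv q))"

end

theory Submission
  imports Defs
begin


definition homg :: "nat \<Rightarrow> 'a::field poly \<Rightarrow> 'a poly \<Rightarrow> 'a poly \<Rightarrow> 'a poly" where
  "homg N g a b = (\<Sum>i\<le>N. smult (coeff g i) (a ^ i * b ^ (N - i)))"

lemma homg_add: "homg N (g + h) a b = homg N g a b + homg N h a b"
  by (simp add: homg_def smult_add_left sum.distrib)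

lemma homg_diff: "homg N (g - h) a b = homg N g a b - homg N h a b"
  by (simp add: homg_def smult_diff_left sum_subtractf)

lemma smult_sum_right: "smult k (sum f A) = (\<Sum>i\<in>A. smult k (f i))"
  by (induction A rule: infinite_finite_induct) (simp_all add: smult_add_right)

lemma homg_smult: "homg N (smult k g) a b = smult k (homg N g a b)"
  by (simp add: homg_def smult_sum_right)

lemma homg_0 [simp]: "homg N 0 a b = 0"
  by (simp add: homg_def)

lemma homg_uminus: "homg N (- g) a b = - homg N g a b"
  using homg_diff[of N 0 g a b] by simp

lemma homg_1: "homg N 1 a b = b ^ N"
proof -
  have "homg N 1 a b = (\<Sum>i\<in>{0}. smult (coeff 1 i) (a ^ i * b ^ (N - i)))"
    unfolding homg_def by (rule sum.mono_neutral_right) auto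
  then show ?thesis by simp
qed

lemma homg_X: "homg 2 [:0,1:] a b = a * b"
  by (simp add: homg_def numeral_2_eq_2 atMost_Suc)

lemma kconst_0 [simp]: "kconst 0 = 0" by (simp add: kconst_def)
lemma kconst_1 [simp]: "kconst 1 = 1" by (simp add: kconst_def flip: one_pCons)
lemma kconst_add: "kconst (x + y) = kconst x + kconst y" by (simp add: kconst_def flip: to_fract_add)
lemma kconst_mult: "kconst (x * y) = kconst x * kconst y"
  by (simp add: kconst_def flip: to_fract_mult)
lemma kconst_minus: "kconst (- x) = - kconst x" by (simp add: kconst_def flip: to_fract_uminus)

lemma peval_add: "peval (g + h) y = peval g y + peval h y"
proof -
  have "map_poly kconst (g + h) = map_poly kconst g + map_poly kconst h"
    by (intro poly_eqI) (simp add: coeff_map_poly kconst_add)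
  then show ?thesis by (simp add: peval_def)
qed

lemma peval_smult: "peval (smult k h) y = kconst k * peval h y"
proof -
  have "map_poly kconst (smult k h) = smult (kconst k) (map_poly kconst h)"
    by (rule map_poly_smult) (auto simp: kconst_mult)
  then show ?thesis by (simp add: peval_def)
qed

lemma peval_pCons: "peval (pCons c h) y = kconst c + y * peval h y"
  by (simp add: peval_def map_poly_pCons)

lemma peval_mult: "peval (g * h) y = peval g y * peval h y"
proof (induction g)
  case 0 then show ?case by (simp add: peval_def)
next
  case (pCons c g)
  have "pCons c g * h = smult c h + pCons 0 (g * h)" by simp
  then have "peval (pCons c g * h) y = kconst c * peval h y + y * peval (g * h) y"
    by (simp only: peval_add peval_smult peval_pCons) simp
  then show ?case using pCons by (simp add: peval_pCons algebra_simps)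
qed

lemma peval_const: "peval [:c:] y = kconst c"
  using peval_pCons[of c 0 y] by (simp add: peval_def)

lemma peval_1 [simp]: "peval 1 y = 1"
  by (simp add: peval_def)

lemma peval_0 [simp]: "peval 0 y = 0"
  by (simp add: peval_def)

lemma peval_power: "peval (g ^ n) y = peval g y ^ n"
  by (induction n) (simp_all add: peval_mult)

lemma peval_diff: "peval (g - h) y = peval g y - peval h y"
  using peval_add[of "g - h" h y] by simp

lemma peval_sum: "peval (sum f A) y = (\<Sum>i\<in>A. peval (f i) y)"
  by (induction A rule: infinite_finite_induct) (simp_all add: peval_add)

lemma peval_altdef:
  assumes "degree c \<le> N"
  shows "peval c y = (\<Sum>i\<le>N. kconst (coeff c i) * y ^ i)"
proof -
  have "peval c y = (\<Sum>i\<le>degree (map_poly kconst c). coeff (map_poly kconst c) i * y ^ i)"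
    by (simp add: peval_def poly_altdef)
  also have "\<dots> = (\<Sum>i\<le>N. coeff (map_poly kconst c) i * y ^ i)"
  proof (rule sum.mono_neutral_left)
    show "\<forall>i\<in>{..N} - {..degree (map_poly kconst c)}. coeff (map_poly kconst c) i * y ^ i = 0"
      by (auto simp: coeff_eq_0)
    show "{..degree (map_poly kconst c)} \<subseteq> {..N}"
      using map_poly_degree_leq[of kconst c] assms by auto
  qed auto
  finally show ?thesis by (simp add: coeff_map_poly)
qed

lemma peval_homg:
  assumes "degree c \<le> N" "peval f y \<noteq> 0"
  shows "peval (homg N c e f) y = peval f y ^ N * peval c (peval e y / peval f y)"
proof -
  have "peval (homg N c e f) y = (\<Sum>i\<le>N. kconst (coeff c i) * (peval e y ^ i * peval f y ^ (N - i)))"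
    by (simp add: homg_def peval_sum peval_smult peval_mult peval_power)
  also have "\<dots> = (\<Sum>i\<le>N. peval f y ^ N * (kconst (coeff c i) * (peval e y / peval f y) ^ i))"
  proof (rule sum.cong)
    fix i assume "i \<in> {..N}"
    then have "peval f y ^ N = peval f y ^ i * peval f y ^ (N - i)"
      by (simp flip: power_add)
    then show "kconst (coeff c i) * (peval e y ^ i * peval f y ^ (N - i)) =
        peval f y ^ N * (kconst (coeff c i) * (peval e y / peval f y) ^ i)"
      using assms(2) by (simp add: power_divide field_simps)
  qed simp
  also have "\<dots> = peval f y ^ N * peval c (peval e y / peval f y)"
    by (simp add: peval_altdef[OF assms(1)] sum_distrib_left)
  finally show ?thesis .
qed

definition Xf :: "'a::field poly fract" where "Xf = to_fract [:0,1:]"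

lemma to_fract_peval: "to_fract g = peval g Xf"
proof (induction g)
  case 0 then show ?case by simp
next
  case (pCons c g)
  have "pCons c g = [:c:] + [:0,1:] * g" by simp
  then have "to_fract (pCons c g) = to_fract ([:c:] + [:0,1:] * g)" by metis
  also have "\<dots> = to_fract [:c:] + to_fract [:0,1:] * to_fract g"
    by (simp only: to_fract_add to_fract_mult)
  finally have "to_fract (pCons c g) = kconst c + Xf * to_fract g"
    by (simp add: kconst_def Xf_def)
  then show ?case using pCons by (simp add: peval_pCons)
qed

lemma homg_fract:
  assumes "degree c \<le> N" "b \<noteq> 0"
  shows "to_fract (homg N c a b) = to_fract b ^ N * peval c (Fract a b)"
proof -
  have "peval b Xf \<noteq> 0" using assms(2) by (simp flip: to_fract_peval)
  then have "peval (homg N c a b) Xf = peval b Xf ^ N * peval c (peval a Xf / peval b Xf)"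
    using peval_homg[OF assms(1)] by blast
  moreover have "Fract a b = to_fract a / to_fract b"
    by (simp add: to_fract_def)
  ultimately show ?thesis by (simp flip: to_fract_peval)
qed

lemma homg_mult:
  assumes "degree g \<le> M" "degree h \<le> N" "b \<noteq> 0"
  shows "homg (M + N) (g * h) a b = homg M g a b * homg N h a b"
proof -
  have d: "degree (g * h) \<le> M + N"
    using degree_mult_le[of g h] assms by linarith
  have "to_fract (homg (M + N) (g * h) a b) = to_fract (homg M g a b * homg N h a b)"
    using homg_fract[OF d assms(3)] homg_fract[OF assms(1) assms(3)] homg_fract[OF assms(2) assms(3)]
    by (simp add: peval_mult power_add)
  then show ?thesis by (metis to_fract_eq_iff)
qed


lemma coeff_Xpderiv: "coeff (pCons 0 (pderiv g)) i = of_nat i * coeff g i"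
  by (cases i) (simp_all add: coeff_pderiv)

lemma degree_Xpderiv: "degree (pCons 0 (pderiv g)) \<le> degree g"
  by (rule degree_le) (auto simp: coeff_Xpderiv coeff_eq_0)

lemma smult_pow_pred: "smult (of_nat n) (p * p ^ (n - 1)) = smult (of_nat n) (p ^ n)"
  by (cases n) simp_all

lemma pderiv_monoterm:
  assumes "i \<le> N"
  shows "a * b * pderiv (a ^ i * b ^ (N - i)) =
    smult (of_nat i) (pderiv a * b * (a ^ i * b ^ (N - i))) +
    smult (of_nat (N - i)) (a * pderiv b * (a ^ i * b ^ (N - i)))"
proof -
  have "a * b * pderiv (a ^ i * b ^ (N - i)) =
     smult (of_nat (N - i)) (b * b ^ (N - i - 1)) * (a * pderiv b * a ^ i) +
     smult (of_nat i) (a * a ^ (i - 1)) * (pderiv a * b * b ^ (N - i))"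
    by (simp add: pderiv_mult pderiv_power algebra_simps)
  also have "\<dots> = smult (of_nat (N - i)) (b ^ (N - i)) * (a * pderiv b * a ^ i) +
     smult (of_nat i) (a ^ i) * (pderiv a * b * b ^ (N - i))"
    by (simp only: smult_pow_pred)
  finally show ?thesis by (simp add: algebra_simps)
qed

lemma pderiv_sum: "pderiv (sum f A) = (\<Sum>i\<in>A. pderiv (f i))"
  by (induction A rule: infinite_finite_induct) (simp_all add: pderiv_add)

lemma pderiv_homg:
  assumes "degree g \<le> N"
  shows "a * b * pderiv (homg N g a b) =
    pderiv a * b * homg N (pCons 0 (pderiv g)) a b +
    a * pderiv b * homg N (smult (of_nat N) g - pCons 0 (pderiv g)) a b"
proof -
  have "a * b * pderiv (homg N g a b) = (\<Sum>i\<le>N. smult (coeff g i) (a * b * pderiv (a ^ i * b ^ (N - i))))"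
    by (simp add: homg_def pderiv_sum pderiv_smult sum_distrib_left)
  also have "\<dots> = (\<Sum>i\<le>N. pderiv a * b * smult (of_nat i * coeff g i) (a ^ i * b ^ (N - i)) +
      a * pderiv b * smult (of_nat N * coeff g i - of_nat i * coeff g i) (a ^ i * b ^ (N - i)))"
  proof (rule sum.cong)
    fix i assume i: "i \<in> {..N}"
    then have eq: "of_nat N * coeff g i - of_nat i * coeff g i = of_nat (N - i) * coeff g i"
      by (simp add: of_nat_diff algebra_simps)
    have m: "a * b * pderiv (a ^ i * b ^ (N - i)) =
    smult (of_nat i) (pderiv a * b * (a ^ i * b ^ (N - i))) +
    smult (of_nat (N - i)) (a * pderiv b * (a ^ i * b ^ (N - i)))"
      using i by (simp add: pderiv_monoterm)
    then show "smult (coeff g i) (a * b * pderiv (a ^ i * b ^ (N - i))) =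
      pderiv a * b * smult (of_nat i * coeff g i) (a ^ i * b ^ (N - i)) +
      a * pderiv b * smult (of_nat N * coeff g i - of_nat i * coeff g i) (a ^ i * b ^ (N - i))"
      unfolding m eq by (simp add: smult_add_right smult_smult mult_ac)
  qed simp
  also have "\<dots> = pderiv a * b * homg N (pCons 0 (pderiv g)) a b +
    a * pderiv b * homg N (smult (of_nat N) g - pCons 0 (pderiv g)) a b"
    by (simp add: homg_def sum.distrib sum_distrib_left coeff_Xpderiv)
  finally show ?thesis .
qed


definition Wr :: "'a::field poly \<Rightarrow> 'a poly \<Rightarrow> 'a poly" where
  "Wr f g = pderiv f * g - f * pderiv g"

lemma wronski_homg:
  assumes dc: "degree c \<le> s" and dd: "degree d \<le> s" and a: "a \<noteq> 0" and b: "b \<noteq> 0"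
    and s: "1 \<le> s" and dW: "degree (Wr c d) \<le> 2 * s - 2"
  shows "Wr (homg s c a b) (homg s d a b) = Wr a b * homg (2 * s - 2) (Wr c d) a b"
proof -
  define T where "T = (\<lambda>x::'a poly. pCons 0 (pderiv x))"
  define H where "H = (\<lambda>x. homg s x a b)"
  define G where "G = (\<lambda>x. homg (2 * s) x a b)"
  have dT: "degree (T x) \<le> s" if "degree x \<le> s" for x
    using degree_Xpderiv[of x] that unfolding T_def by linarith
  have dS: "degree (smult (of_nat s) x - T x) \<le> s" if "degree x \<le> s" for x
    using degree_diff_le[OF order.trans[OF degree_smult_le that] dT[OF that]] .
  have prod: "H x * H y = G (x * y)" if "degree x \<le> s" "degree y \<le> s" for x y
    using homg_mult[OF that b, of a] unfolding H_def G_def by (simp add: mult_2)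
  have D: "a * b * pderiv (H x) = pderiv a * b * H (T x) + a * pderiv b * H (smult (of_nat s) x - T x)"
    if "degree x \<le> s" for x
    using pderiv_homg[OF that] unfolding H_def T_def by simp
  have XW: "G ([:0,1:] * Wr c d) = a * b * homg (2 * s - 2) (Wr c d) a b"
  proof -
    have "homg (2 + (2 * s - 2)) ([:0,1:] * Wr c d) a b = homg 2 [:0,1:] a b * homg (2 * s - 2) (Wr c d) a b"
      by (rule homg_mult[OF _ dW b]) simp
    moreover have "2 + (2 * s - 2) = 2 * s" using s by simp
    ultimately show ?thesis unfolding G_def by (simp add: homg_X)
  qed
  have id1: "T c * d - c * T d = [:0,1:] * Wr c d"
    unfolding T_def Wr_def by (simp add: algebra_simps)
  have id2: "(smult (of_nat s) c - T c) * d - c * (smult (of_nat s) d - T d) = - ([:0,1:] * Wr c d)"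
    unfolding T_def Wr_def by (simp add: algebra_simps)
  have "a * b * Wr (H c) (H d) = (a * b * pderiv (H c)) * H d - H c * (a * b * pderiv (H d))"
    unfolding Wr_def by (simp add: algebra_simps)
  also have "\<dots> = pderiv a * b * (H (T c) * H d - H c * H (T d)) +
      a * pderiv b * (H (smult (of_nat s) c - T c) * H d - H c * H (smult (of_nat s) d - T d))"
    unfolding D[OF dc] D[OF dd] by (simp add: algebra_simps)
  also have "\<dots> = pderiv a * b * (G (T c * d - c * T d)) +
      a * pderiv b * G ((smult (of_nat s) c - T c) * d - c * (smult (of_nat s) d - T d))"
    using prod dT dS dc dd unfolding G_def by (simp add: homg_diff)
  also have "\<dots> = a * b * (Wr a b * homg (2 * s - 2) (Wr c d) a b)"
  proof -
    have "G (- ([:0,1:] * Wr c d)) = - G ([:0,1:] * Wr c d)"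
      unfolding G_def by (rule homg_uminus)
    then show ?thesis unfolding id1 id2 XW by (simp add: Wr_def algebra_simps)
  qed
  finally show ?thesis using a b unfolding H_def by simp
qed



lemma degree_monoterm:
  fixes a b :: "'a::field poly"
  assumes "a \<noteq> 0" "b \<noteq> 0"
  shows "degree (a ^ i * b ^ (N - i)) = i * degree a + (N - i) * degree b"
proof -
  have "a ^ i \<noteq> 0" "b ^ (N - i) \<noteq> 0" using assms by auto
  then have "degree (a ^ i * b ^ (N - i)) = degree (a ^ i) + degree (b ^ (N - i))"
    by (rule degree_mult_eq)
  then show ?thesis using assms by (simp add: degree_power_eq)
qed

lemma nat_ineq_aux:
  fixes i k N ra rb :: nat
  assumes "i < k" "k \<le> N" "rb < ra"
  shows "i * ra + (N - i) * rb < k * ra + (N - k) * rb"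
proof -
  obtain t where t: "k = i + t" "t > 0" using assms(1) less_imp_add_positive by blast
  have ni: "N - i = (N - k) + t" using t assms(2) by simp
  have e1: "k * ra = i * ra + t * ra" using t by (simp add: add_mult_distrib)
  have e2: "(N - i) * rb = (N - k) * rb + t * rb" using ni by (simp add: add_mult_distrib)
  have "t * rb < t * ra" using t(2) assms(3) by simp
  then show ?thesis using e1 e2 by linarith
qed

lemma degree_homg:
  assumes ab: "degree b < degree a" and b: "b \<noteq> 0" and c: "c \<noteq> 0" and dc: "degree c \<le> N"
  shows "degree (homg N c a b) = degree c * degree a + (N - degree c) * degree b"
proof -
  have a: "a \<noteq> 0" using ab by auto
  define k where "k = degree c"
  define P where "P = (\<lambda>i. smult (coeff c i) (a ^ i * b ^ (N - i)))"
  have "homg N c a b = (\<Sum>i\<le>k. P i)"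
    unfolding homg_def P_def
    by (rule sum.mono_neutral_right) (auto simp: k_def dc coeff_eq_0)
  also have "\<dots> = (\<Sum>i<k. P i) + P k"
    by (simp add: lessThan_Suc_atMost[symmetric])
  finally have eq: "homg N c a b = (\<Sum>i<k. P i) + P k" .
  have topdeg: "degree (P k) = k * degree a + (N - k) * degree b"
    using c a b unfolding P_def k_def by (simp add: degree_monoterm)
  show ?thesis
  proof (cases "k = 0")
    case True then show ?thesis using eq topdeg k_def by simp
  next
    case False
    then have k0: "k > 0" by simp
    have "degree (\<Sum>i<k. P i) < degree (P k)"
    proof (rule degree_sum_less)
      fix i assume "i \<in> {..<k}"
      then have "i < k" by simp
      have "degree (P i) \<le> i * degree a + (N - i) * degree b"
        unfolding P_def using degree_smult_le[of "coeff c i" "a ^ i * b ^ (N - i)"] degree_monoterm[OF a b, of i N]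
        by simp
      also have "\<dots> < k * degree a + (N - k) * degree b"
        using nat_ineq_aux[OF \<open>i < k\<close> _ ab] dc k_def by simp
      finally show "degree (P i) < degree (P k)" using topdeg by simp
    next
      have "0 < k * degree a" using k0 ab by simp
      then show "0 < degree (P k)" using topdeg by simp
    qed
    then show ?thesis using eq topdeg degree_add_eq_right k_def by metis
  qed
qed

lemma coeff_mult_le:
  assumes "degree f \<le> m" "degree g \<le> n"
  shows "coeff (f * g) (m + n) = coeff f m * coeff g n"
proof -
  have "coeff (f * g) (m + n) = (\<Sum>i\<le>m+n. coeff f i * coeff g (m + n - i))"
    by (rule coeff_mult)
  also have "\<dots> = (\<Sum>i\<in>{m}. coeff f i * coeff g (m + n - i))"
  proof (rule sum.mono_neutral_right)
    show "\<forall>i\<in>{..m + n} - {m}. coeff f i * coeff g (m + n - i) = 0"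
    proof
      fix i assume "i \<in> {..m + n} - {m}"
      then have "i < m \<or> i > m" by auto
      then show "coeff f i * coeff g (m + n - i) = 0"
        using assms by (auto simp: coeff_eq_0)
    qed
  qed auto
  finally show ?thesis by simp
qed

lemma degree_pderiv_le: "degree (pderiv f) \<le> degree f - 1"
  by (rule degree_le) (auto simp: coeff_pderiv coeff_eq_0)

lemma pderiv_const_0:
  assumes "degree g = 0" shows "pderiv g = 0"
  by (rule poly_eqI) (simp add: coeff_pderiv coeff_eq_0 assms)

lemma Wr_degree:
  fixes f g :: "'a::field poly"
  assumes fg: "degree g < degree f" and g: "g \<noteq> 0"
    and ch: "of_nat (degree f - degree g) \<noteq> (0::'a)"
  shows "degree (Wr f g) = degree f + degree g - 1"
    and "coeff (Wr f g) (degree f + degree g - 1) = of_nat (degree f - degree g) * lead_coeff f * lead_coeff g"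
proof -
  define N where "N = degree f + degree g - 1"
  have f: "f \<noteq> 0" using fg by auto
  have c1: "coeff (pderiv f * g) N = of_nat (degree f) * lead_coeff f * lead_coeff g"
  proof -
    have "N = (degree f - 1) + degree g" using fg N_def by simp
    then have "coeff (pderiv f * g) N = coeff (pderiv f) (degree f - 1) * coeff g (degree g)"
      using coeff_mult_le[OF degree_pderiv_le order.refl] by simp
    moreover have "coeff (pderiv f) (degree f - 1) = of_nat (degree f) * lead_coeff f"
      using fg by (simp add: coeff_pderiv)
    ultimately show ?thesis by simp
  qed
  have c2: "coeff (f * pderiv g) N = of_nat (degree g) * lead_coeff f * lead_coeff g"
  proof (cases "degree g = 0")
    case True then show ?thesis by (simp add: pderiv_const_0)
  next
    case False
    then have "N = degree f + (degree g - 1)" using N_def by simp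
    then have "coeff (f * pderiv g) N = coeff f (degree f) * coeff (pderiv g) (degree g - 1)"
      using coeff_mult_le[OF order.refl degree_pderiv_le] by simp
    moreover have "coeff (pderiv g) (degree g - 1) = of_nat (degree g) * lead_coeff g"
      using False by (simp add: coeff_pderiv)
    ultimately show ?thesis by simp
  qed
  have cN: "coeff (Wr f g) N = of_nat (degree f - degree g) * lead_coeff f * lead_coeff g"
    unfolding Wr_def using c1 c2 fg by (simp add: of_nat_diff algebra_simps)
  then show "coeff (Wr f g) (degree f + degree g - 1) = of_nat (degree f - degree g) * lead_coeff f * lead_coeff g"
    by (simp add: N_def)
  have "coeff (Wr f g) N \<noteq> 0" using cN ch f g by simp
  then have ge: "N \<le> degree (Wr f g)" by (rule le_degree)
  have d1: "degree (pderiv f * g) \<le> N"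
    using degree_mult_le[of "pderiv f" g] degree_pderiv_le[of f] fg N_def by linarith
  have d2: "degree (f * pderiv g) \<le> N"
  proof (cases "degree g = 0")
    case True then show ?thesis by (simp add: pderiv_const_0)
  next
    case False then show ?thesis
      using degree_mult_le[of f "pderiv g"] degree_pderiv_le[of g] fg N_def by linarith
  qed
  have "degree (Wr f g) \<le> N" unfolding Wr_def using degree_diff_le[OF d1 d2] .
  with ge show "degree (Wr f g) = degree f + degree g - 1" by (simp add: N_def)
qed



lemma poly_bezout_ex:
  fixes c d :: "'a::field poly"
  shows "\<exists>g \<alpha> \<beta>. \<alpha> * c + \<beta> * d = g \<and> g dvd c \<and> g dvd d"
proof (induction d arbitrary: c rule: measure_induct_rule[of "\<lambda>d. if d = 0 then 0 else Suc (degree d)"])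
  case (less d)
  show ?case
  proof (cases "d = 0")
    case True
    then show ?thesis by (intro exI[of _ c] exI[of _ 1] exI[of _ 0]) simp
  next
    case False
    have "(if c mod d = 0 then 0 else Suc (degree (c mod d))) < (if d = 0 then 0 else Suc (degree d))"
      using False degree_mod_less[OF False, of c] by auto
    from less[OF this, of d] obtain g \<alpha> \<beta> where
      h: "\<alpha> * d + \<beta> * (c mod d) = g" "g dvd d" "g dvd c mod d" by blast
    have cm: "c mod d = c - (c div d) * d" by (simp add: minus_div_mult_eq_mod)
    have "\<beta> * c + (\<alpha> - \<beta> * (c div d)) * d = g"
      using h(1) unfolding cm by (simp add: algebra_simps)
    moreover have "g dvd c"
      using h(2,3) div_mult_mod_eq[of c d] by (metis dvd_add dvd_mult)
    ultimately show ?thesis using h(2) by blast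
  qed
qed

lemma poly_bezout:
  fixes c d :: "'a::field poly"
  assumes "coprime c d"
  shows "\<exists>\<alpha> \<beta>. \<alpha> * c + \<beta> * d = 1"
proof -
  obtain g \<alpha> \<beta> where h: "\<alpha> * c + \<beta> * d = g" "g dvd c" "g dvd d"
    using poly_bezout_ex by blast
  then have "is_unit g" using assms coprime_common_divisor by blast
  then obtain k where "1 = g * k" by (auto simp: dvd_def)
  have "(k * \<alpha>) * c + (k * \<beta>) * d = k * (\<alpha> * c + \<beta> * d)" by (simp add: algebra_simps)
  also have "\<dots> = 1" using h(1) \<open>1 = g * k\<close> by (simp add: mult.commute)
  finally have "(k * \<alpha>) * c + (k * \<beta>) * d = 1" .
  then show ?thesis by blast
qed

lemma poly_coprime_dvd_mult:
  fixes x y z :: "'a::field poly"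
  assumes "coprime x z" "z dvd x * y"
  shows "z dvd y"
proof -
  obtain \<alpha> \<beta> where ab: "\<alpha> * x + \<beta> * z = 1" using poly_bezout[OF assms(1)] by blast
  have "y = y * (\<alpha> * x + \<beta> * z)" using ab by simp
  also have "\<dots> = \<alpha> * (x * y) + (\<beta> * y) * z" by (simp add: algebra_simps)
  finally have yy: "y = \<alpha> * (x * y) + (\<beta> * y) * z" .
  have "z dvd \<alpha> * (x * y)" using assms(2) by (rule dvd_mult)
  moreover have "z dvd (\<beta> * y) * z" by simp
  ultimately show ?thesis by (subst yy) (rule dvd_add)
qed

lemma poly_coprime_mult:
  fixes x y z :: "'a::field poly"
  assumes "coprime x z" "coprime y z"
  shows "coprime (x * y) z"
proof (rule coprimeI)
  fix e assume e: "e dvd x * y" "e dvd z"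
  have "coprime x e" using assms(1) e(2) by (meson coprimeI coprime_common_divisor dvd_trans)
  then have "e dvd y" using e(1) poly_coprime_dvd_mult by blast
  then show "is_unit e" using assms(2) e(2) coprime_common_divisor by blast
qed

lemma poly_coprime_power:
  fixes x z :: "'a::field poly"
  assumes "coprime x z"
  shows "coprime (x ^ n) z"
  by (induction n) (simp_all add: poly_coprime_mult assms)

lemma poly_irreducible_prime:
  fixes h x y :: "'a::field poly"
  assumes "irreducible h" "h dvd x * y" "\<not> h dvd x"
  shows "h dvd y"
proof -
  have "coprime x h"
  proof (rule coprimeI)
    fix e assume e: "e dvd x" "e dvd h"
    from irreducibleD'[OF assms(1) e(2)] show "is_unit e"
      using e(1) assms(3) dvd_trans by blast
  qed
  then show ?thesis using assms(2) poly_coprime_dvd_mult by blast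
qed

lemma poly_unit_deg:
  fixes d :: "'a::field poly"
  assumes "is_unit d" shows "d \<noteq> 0 \<and> degree d = 0"
  using assms is_unit_iff_degree[of d] by (cases "d = 0") auto

lemma homg_mod_b:
  "b dvd homg s c a b - smult (coeff c s) (a ^ s)"
proof -
  have "homg s c a b = (\<Sum>i<s. smult (coeff c i) (a ^ i * b ^ (s - i))) + smult (coeff c s) (a ^ s)"
    unfolding homg_def by (simp add: lessThan_Suc_atMost[symmetric])
  moreover have "b dvd (\<Sum>i<s. smult (coeff c i) (a ^ i * b ^ (s - i)))"
  proof (rule dvd_sum)
    fix i assume "i \<in> {..<s}"
    then have "b dvd b ^ (s - i)" by (simp add: dvd_power)
    then have "b dvd a ^ i * b ^ (s - i)" by (rule dvd_mult)
    then show "b dvd smult (coeff c i) (a ^ i * b ^ (s - i))"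
      by (rule dvd_smult)
  qed
  ultimately show ?thesis by simp
qed

lemma homg_coprime_b:
  fixes a b c :: "'a::field poly"
  assumes ab: "coprime a b" and c: "coeff c s \<noteq> 0"
  shows "coprime (homg s c a b) b"
proof (rule coprimeI)
  fix e assume e: "e dvd homg s c a b" "e dvd b"
  have "e dvd homg s c a b - (homg s c a b - smult (coeff c s) (a ^ s))"
    by (rule dvd_diff[OF e(1) dvd_trans[OF e(2) homg_mod_b]])
  then have "e dvd smult (coeff c s) (a ^ s)" by simp
  then have "e dvd a ^ s" using c dvd_smult_cancel by blast
  moreover have "coprime (a ^ s) b" using ab poly_coprime_power by blast
  ultimately show "is_unit e" using e(2) coprime_common_divisor by blast
qed

lemma homg_coprime:
  fixes a b c d :: "'a::field poly"
  assumes cd: "coprime c d" and s: "s = max (degree c) (degree d)"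
    and ab: "coprime a b" and b: "b \<noteq> 0"
  shows "coprime (homg s c a b) (homg s d a b)"
proof (rule coprimeI)
  fix x assume xC: "x dvd homg s c a b" and xD: "x dvd homg s d a b"
  obtain \<alpha> \<beta> where bez: "\<alpha> * c + \<beta> * d = 1" using poly_bezout[OF cd] by blast
  define M where "M = max (degree \<alpha>) (degree \<beta>)"
  have dc: "degree c \<le> s" and dd: "degree d \<le> s" using s by auto
  have "homg (M + s) (\<alpha> * c + \<beta> * d) a b = homg M \<alpha> a b * homg s c a b + homg M \<beta> a b * homg s d a b"
    using homg_mult[of \<alpha> M c s b a] homg_mult[of \<beta> M d s b a] dc dd b
    by (simp add: homg_add M_def)
  then have key: "homg M \<alpha> a b * homg s c a b + homg M \<beta> a b * homg s d a b = b ^ (M + s)"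
    using bez by (simp add: homg_1)
  have xb: "x dvd b ^ (M + s)"
    unfolding key[symmetric] using xC xD by (simp add: dvd_add dvd_mult)
  have "coeff c s \<noteq> 0 \<or> coeff d s \<noteq> 0"
  proof (rule ccontr)
    assume "\<not> (coeff c s \<noteq> 0 \<or> coeff d s \<noteq> 0)"
    then have z: "coeff c s = 0" "coeff d s = 0" by auto
    have "c = 0 \<or> d = 0"
      using z s by (metis leading_coeff_0_iff max_def)
    moreover have "c = 0 \<Longrightarrow> s = 0 \<and> d \<noteq> 0" using s cd poly_unit_deg[of d] by simp
    moreover have "d = 0 \<Longrightarrow> s = 0 \<and> c \<noteq> 0" using s cd poly_unit_deg[of c] by simp
    ultimately consider "c = 0" "d \<noteq> 0" | "d = 0" "c \<noteq> 0" by blast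
    then show False
    proof cases
      case 1
      then have "s = degree d" using s by simp
      then show False using z 1 by simp
    next
      case 2
      then have "s = degree c" using s by simp
      then show False using z 2 by simp
    qed
  qed
  then have "coprime (homg s c a b) b \<or> coprime (homg s d a b) b"
    using homg_coprime_b[OF ab] by blast
  then have "coprime (homg s c a b) (b ^ (M + s)) \<or> coprime (homg s d a b) (b ^ (M + s))"
    using poly_coprime_power by (metis coprime_commute)
  then show "is_unit x" using xC xD xb coprime_common_divisor by blast
qed



lemma map_poly_hom_add:
  assumes f0: "f 0 = 0" and "\<And>x y. f (x + y) = f x + f y"
  shows "map_poly f (g + h) = map_poly f g + map_poly f h"
  by (intro poly_eqI) (simp add: coeff_map_poly f0 assms)

lemma map_poly_hom_mult:
  fixes f :: "'a::comm_ring_1 \<Rightarrow> 'b::comm_ring_1"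
  assumes f0: "f 0 = 0" and add: "\<And>x y. f (x + y) = f x + f y" and mult: "\<And>x y. f (x * y) = f x * f y"
  shows "map_poly f (g * h) = map_poly f g * map_poly f h"
proof (induction g)
  case 0 then show ?case by simp
next
  case (pCons c g)
  have "pCons c g * h = smult c h + pCons 0 (g * h)" by simp
  then have "map_poly f (pCons c g * h) = smult (f c) (map_poly f h) + pCons 0 (map_poly f (g * h))"
    by (simp only: map_poly_hom_add[of f, OF f0 add] map_poly_smult[of f, OF f0 mult] map_poly_pCons[of f, OF f0] f0)
  then show ?case using pCons by (simp add: map_poly_pCons[of f, OF f0])
qed

lemma map_to_ac_mult: "map_poly to_ac (g * h) = map_poly to_ac g * map_poly to_ac h"
  by (rule map_poly_hom_mult) simp_all

lemma map_to_ac_pderiv: "map_poly to_ac (pderiv g) = pderiv (map_poly to_ac g)"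
  by (intro poly_eqI) (simp add: coeff_map_poly coeff_pderiv)

lemma degree_map_to_ac: "degree (map_poly to_ac g) = degree g"
  by (cases "g = 0") (simp_all add: map_poly_degree_eq)

lemma rsq_deriv_nonzero:
  fixes Q :: "'b::field poly"
  assumes "rsquarefree Q" "poly Q z = 0"
  shows "poly (pderiv Q) z \<noteq> 0"
proof -
  have Q: "Q \<noteq> 0" using assms(1) by (simp add: rsquarefree_def)
  then have "order z Q \<noteq> 0" using assms(2) order_root by blast
  moreover have "order z Q = 0 \<or> order z Q = 1" using assms(1) unfolding rsquarefree_def by blast
  ultimately have o1: "order z Q = 1" by simp
  obtain h where h: "Q = [:- z, 1:] ^ order z Q * h" "\<not> [:- z, 1:] dvd h"
    using order_decomp[OF Q] by blast
  have hz: "poly h z \<noteq> 0" using h(2) by (simp add: poly_eq_0_iff_dvd)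
  have QQ: "Q = [:- z, 1:] * h" using h(1) o1 by simp
  have pl: "pderiv [:- z, 1:] = 1" by (simp add: pderiv_pCons)
  have "poly (pderiv Q) z = poly h z"
    unfolding QQ pderiv_mult pl by simp
  then show ?thesis using hz by simp
qed

lemma sqfree_coprime_deriv:
  fixes q :: "'a::field poly"
  assumes sq: "rsquarefree (map_poly (to_ac :: 'a \<Rightarrow> 'a alg_closure) q)"
  shows "coprime q (pderiv q)"
proof (rule coprimeI)
  fix e assume e: "e dvd q" "e dvd pderiv q"
  have q0: "q \<noteq> 0" using sq by (auto simp: rsquarefree_def)
  have e0: "e \<noteq> 0" using e(1) q0 by auto
  show "is_unit e"
  proof (rule ccontr)
    assume "\<not> is_unit e"
    then have "degree e > 0" using is_unit_iff_degree[OF e0] by simp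
    then have "degree (map_poly (to_ac :: 'a \<Rightarrow> 'a alg_closure) e) > 0"
      by (simp add: degree_map_to_ac)
    then obtain z where z: "poly (map_poly (to_ac :: 'a \<Rightarrow> 'a alg_closure) e) z = 0"
      using alg_closed_imp_poly_has_root by blast
    obtain k where k: "q = e * k" using e(1) by (auto simp: dvd_def)
    obtain k' where k': "pderiv q = e * k'" using e(2) by (auto simp: dvd_def)
    have "poly (map_poly to_ac q) z = 0"
      using z unfolding k by (simp add: map_to_ac_mult)
    moreover have "poly (pderiv (map_poly to_ac q)) z = 0"
      using z unfolding map_to_ac_pderiv[symmetric] k' by (simp add: map_to_ac_mult)
    ultimately show False using rsq_deriv_nonzero[OF sq] by blast
  qed
qed

lemma coprime_Wr_q:
  fixes p q :: "'a::field poly"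
  assumes pq: "coprime p q" and qq: "coprime q (pderiv q)"
  shows "coprime (Wr p q) q"
proof (rule coprimeI)
  fix e assume e: "e dvd Wr p q" "e dvd q"
  have "p * pderiv q = pderiv p * q - Wr p q" by (simp add: Wr_def)
  moreover have "e dvd pderiv p * q - Wr p q" using e by (simp add: dvd_diff dvd_mult)
  ultimately have epq: "e dvd p * pderiv q" by simp
  have "coprime p e"
    by (rule coprimeI) (meson pq e(2) coprime_common_divisor dvd_trans)
  then have "e dvd pderiv q" using epq poly_coprime_dvd_mult by blast
  then show "is_unit e" using qq e(2) coprime_common_divisor by blast
qed



lemma deg_pow_le1:
  fixes e :: "'a::field poly"
  assumes "degree e \<le> 1" shows "degree (e ^ i) \<le> i"
proof -
  have h1: "degree e * i \<le> i" using mult_le_mono1[OF assms, of i] by simp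
  show ?thesis using degree_power_le[of e i] h1 by linarith
qed

lemma degree_homg_le:
  fixes e f :: "'a::field poly"
  assumes "degree e \<le> 1" "degree f \<le> 1"
  shows "degree (homg s c e f) \<le> s"
  unfolding homg_def
proof (rule degree_sum_le)
  fix i assume i: "i \<in> {..s}"
  have "degree (e ^ i) \<le> i" using deg_pow_le1 assms(1) by blast
  moreover have "degree (f ^ (s - i)) \<le> s - i" using deg_pow_le1 assms(2) by blast
  ultimately have "degree (e ^ i * f ^ (s - i)) \<le> s"
    using degree_mult_le[of "e ^ i" "f ^ (s - i)"] i by auto
  then show "degree (smult (coeff c i) (e ^ i * f ^ (s - i))) \<le> s"
    using degree_smult_le dual_order.trans by blast
qed simp

lemma coeff_power_top:
  fixes e :: "'a::field poly"
  assumes "degree e \<le> 1"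
  shows "coeff (e ^ i) i = coeff e 1 ^ i"
proof (induction i)
  case 0 then show ?case by simp
next
  case (Suc i)
  have "degree (e ^ i) \<le> i" using deg_pow_le1 assms by blast
  then have "coeff (e * e ^ i) (1 + i) = coeff e 1 * coeff (e ^ i) i"
    using coeff_mult_le[OF assms] by blast
  then show ?case using Suc by simp
qed

lemma coeff_homg_top:
  fixes e f :: "'a::field poly"
  assumes e: "degree e \<le> 1" and f: "degree f \<le> 1"
  shows "coeff (homg s c e f) s = (\<Sum>i\<le>s. coeff c i * coeff e 1 ^ i * coeff f 1 ^ (s - i))"
  unfolding homg_def coeff_sum
proof (rule sum.cong)
  fix i assume i: "i \<in> {..s}"
  have "degree (e ^ i) \<le> i" using deg_pow_le1 e by blast
  moreover have "degree (f ^ (s - i)) \<le> s - i" using deg_pow_le1 f by blast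
  ultimately have "coeff (e ^ i * f ^ (s - i)) (i + (s - i)) = coeff (e ^ i) i * coeff (f ^ (s - i)) (s - i)"
    by (rule coeff_mult_le)
  then show "coeff (smult (coeff c i) (e ^ i * f ^ (s - i))) s = coeff c i * coeff e 1 ^ i * coeff f 1 ^ (s - i)"
    using i coeff_power_top[OF e] coeff_power_top[OF f] by simp
qed simp

lemma poly_sum_le:
  fixes c :: "'a::comm_semiring_1 poly"
  assumes "degree c \<le> s"
  shows "poly c x = (\<Sum>i\<le>s. coeff c i * x ^ i)"
  unfolding poly_altdef
  by (rule sum.mono_neutral_left) (auto simp: assms coeff_eq_0)



lemma normalize_decomp:
  fixes a b c d :: "'a::field poly"
  assumes b: "b \<noteq> 0" and ab: "coprime a b" and cd: "coprime c d"
    and s: "s = max (degree c) (degree d)" and ale: "degree a \<le> degree b" and b2: "degree b \<ge> 2"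
  shows "\<exists>a1 b1 c1 d1. b1 \<noteq> 0 \<and> coprime a1 b1 \<and> s = max (degree c1) (degree d1) \<and>
     degree b1 < degree a1 \<and> degree a1 = degree b \<and>
     homg s c1 a1 b1 = homg s c a b \<and> homg s d1 a1 b1 = homg s d a b"
proof -
  define \<beta> where "\<beta> = (if degree a = degree b then lead_coeff a / lead_coeff b else 0)"
  define b1 where "b1 = a - smult \<beta> b"
  define e where "e = [:1, \<beta>:]"
  define f where "f = [:0, 1::'a:]"
  have de: "degree e \<le> 1" unfolding e_def by simp
  have df: "degree f \<le> 1" unfolding f_def by simp
  have f0: "f \<noteq> 0" unfolding f_def by simp
  have db1: "degree b1 < degree b"
  proof (cases "degree a = degree b")
    case True
    have "coeff b1 (degree b) = 0"
      using True b unfolding b1_def \<beta>_def by simp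
    moreover have "degree b1 \<le> degree b"
      unfolding b1_def using True degree_diff_le degree_smult_le by (metis order.refl)
    ultimately show ?thesis using b2
      by (metis le_neq_implies_less leading_coeff_0_iff not_numeral_le_zero degree_0 le_zero_eq)
  next
    case False
    then show ?thesis using ale unfolding b1_def \<beta>_def by simp
  qed
  have b1: "b1 \<noteq> 0"
  proof
    assume "b1 = 0"
    then have "a = smult \<beta> b" unfolding b1_def by simp
    then have "b dvd a" using dvd_smult[OF dvd_refl] by simp
    then have "is_unit b" using coprime_common_divisor[OF ab _ dvd_refl] by blast
    then show False using b2 poly_unit_deg[of b] by simp
  qed
  have cop1: "coprime b b1"
  proof (rule coprimeI)
    fix x assume x: "x dvd b" "x dvd b1"
    have "a = b1 + smult \<beta> b" unfolding b1_def by simp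
    moreover have "x dvd b1 + smult \<beta> b" using x by (simp add: dvd_add dvd_smult)
    ultimately have "x dvd a" by simp
    then show "is_unit x" using coprime_common_divisor[OF ab _ x(1)] by blast
  qed
  define c1 where "c1 = homg s c e f"
  define d1 where "d1 = homg s d e f"
  have comp: "homg s (homg s g e f) b b1 = homg s g a b" if g: "degree g \<le> s" for g
  proof -
    define y where "y = Fract b b1"
    have y0: "y \<noteq> 0" using b b1 unfolding y_def by (simp add: Zero_fract_def eq_fract)
    have pf: "peval f y = y" unfolding f_def by (simp add: peval_pCons peval_const)
    have pe: "peval e y = 1 + y * kconst \<beta>" unfolding e_def by (simp add: peval_pCons peval_const)
    have yb: "to_fract b1 * y = to_fract b" unfolding y_def using b1 by (simp add: to_fract_def eq_fract)
    have "peval e y / peval f y = Fract a b"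
    proof -
      have kb: "to_fract (smult \<beta> b) = kconst \<beta> * to_fract b"
        by (simp add: kconst_def flip: to_fract_mult)
      have "peval e y / peval f y = (to_fract b1 + kconst \<beta> * to_fract b) / to_fract b"
      proof -
        have yv: "y = to_fract b / to_fract b1" unfolding y_def using b1 by (simp add: to_fract_def)
        show ?thesis unfolding pe pf unfolding yv using b b1 by (simp add: field_simps)
      qed
      also have "to_fract b1 + kconst \<beta> * to_fract b = to_fract a"
        unfolding b1_def using kb by simp
      finally show ?thesis by (simp add: to_fract_def)
    qed
    have "to_fract (homg s (homg s g e f) b b1) = to_fract b1 ^ s * peval (homg s g e f) y"
      unfolding y_def by (rule homg_fract[OF degree_homg_le[OF de df] b1])
    also have "\<dots> = to_fract b1 ^ s * (y ^ s * peval g (Fract a b))"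
      using peval_homg[OF g, of f y e] pf y0 \<open>peval e y / peval f y = Fract a b\<close> by simp
    also have "\<dots> = (to_fract b1 * y) ^ s * peval g (Fract a b)" by (simp add: power_mult_distrib)
    also have "\<dots> = to_fract (homg s g a b)" unfolding yb using homg_fract[OF g b] by simp
    finally show ?thesis by (metis to_fract_eq_iff)
  qed
  have dcs: "degree c \<le> s" "degree d \<le> s" using s by auto
  have top: "coeff (homg s g e f) s = poly g \<beta>" if g: "degree g \<le> s" for g
    unfolding coeff_homg_top[OF de df] poly_sum_le[OF g] by (simp add: e_def f_def)
  have "poly c \<beta> \<noteq> 0 \<or> poly d \<beta> \<noteq> 0"
  proof (rule ccontr)
    assume "\<not> (poly c \<beta> \<noteq> 0 \<or> poly d \<beta> \<noteq> 0)"
    then have "[:-\<beta>, 1:] dvd c" "[:-\<beta>, 1:] dvd d" by (simp_all add: poly_eq_0_iff_dvd)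
    then have "is_unit [:-\<beta>, 1:]" using coprime_common_divisor[OF cd] by blast
    then show False using poly_unit_deg[of "[:-\<beta>, 1:]"] by simp
  qed
  then have "coeff c1 s \<noteq> 0 \<or> coeff d1 s \<noteq> 0" unfolding c1_def d1_def using top dcs by simp
  then have "s \<le> degree c1 \<or> s \<le> degree d1" using le_degree by blast
  then have "s \<le> max (degree c1) (degree d1)" by auto
  moreover have "max (degree c1) (degree d1) \<le> s"
    unfolding c1_def d1_def using degree_homg_le[OF de df] by simp
  ultimately have smax: "s = max (degree c1) (degree d1)" by simp
  show ?thesis
    apply (rule exI[of _ b], rule exI[of _ b1], rule exI[of _ c1], rule exI[of _ d1])
    using b1 cop1 smax db1 comp dcs unfolding c1_def d1_def by simp
qed



lemma nat_mono_aux: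
  fixes i k N ra rb :: nat
  assumes "i \<le> k" "k \<le> N" "rb < ra"
  shows "i * ra + (N - i) * rb \<le> k * ra + (N - k) * rb"
  using nat_ineq_aux[of i k N rb ra] assms by (cases "i = k") auto

lemma nat_ident_aux:
  fixes s e r rb :: nat
  assumes "e < s" "rb < r"
  shows "s * r - (e * r + (s - e) * rb) = (s - e) * (r - rb)"
proof -
  define t where "t = s - e"
  have t: "s = e + t" using assms(1) unfolding t_def by simp
  have "s * r = e * r + t * r" using t by (simp add: add_mult_distrib)
  moreover have "t * rb \<le> t * r" using assms(2) by simp
  ultimately show ?thesis using t by (simp add: diff_mult_distrib2)
qed

lemma nat_final_aux:
  fixes s e r rb :: nat
  assumes "e < s" "rb < r" "2 \<le> s"
  shows "r + rb - 1 < (s + e - 1) * r + (2 * s - 2 - (s + e - 1)) * rb"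
proof (cases "3 \<le> s + e")
  case True
  have "2 * r \<le> (s + e - 1) * r" using True by (intro mult_le_mono1) simp
  then show ?thesis using assms(2) by linarith
next
  case False
  then have "s = 2" "e = 0" using assms by auto
  then show ?thesis using assms(2) by simp
qed

lemma Wr_smult: "Wr (smult k f) (smult k g) = smult (k * k) (Wr f g)"
  by (simp add: Wr_def pderiv_smult algebra_simps smult_diff_right)

lemma main_contra:
  fixes p q a b c d :: "'a::field poly"
  assumes q0: "q \<noteq> 0" and pq: "coprime p q" and dpq: "degree q < degree p"
    and tame: "\<not> CHAR('a) dvd (degree p - degree q)"
    and Whyp: "irreducible (Wr p q) \<or> (\<exists>h u. irreducible h \<and> is_unit u \<and> Wr p q = u * h ^ 2)"
    and b0: "b \<noteq> 0" and ab: "coprime a b" and dab: "degree b < degree a" and a2: "degree a \<ge> 2"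
    and s: "s = max (degree c) (degree d)" and s2: "s \<ge> 2"
    and CD: "coprime (homg s c a b) (homg s d a b)"
    and eq: "p * homg s d a b = q * homg s c a b"
  shows False
proof -
  define C where "C = homg s c a b"
  define D where "D = homg s d a b"
  define r where "r = degree a"
  define rb where "rb = degree b"
  have p0: "p \<noteq> 0" using dpq by auto
  have a0: "a \<noteq> 0" using dab by auto
  have "p dvd q * C" using eq unfolding C_def D_def by (metis dvd_triv_left)
  moreover have "coprime q p" using pq by (simp add: coprime_commute)
  ultimately have "p dvd C" using poly_coprime_dvd_mult by blast
  then obtain t where Ct: "C = p * t" by (auto simp: dvd_def)
  have "p * D = p * (q * t)" using eq Ct unfolding C_def D_def by (simp add: algebra_simps)
  then have Dt: "D = q * t" using p0 by simp
  have "is_unit t" using coprime_common_divisor[OF CD] Ct Dt unfolding C_def D_def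
    by (metis dvd_triv_right)
  then have "t \<noteq> 0" "degree t = 0" using poly_unit_deg by auto
  then obtain \<kappa> where \<kappa>: "t = [:\<kappa>:]" "\<kappa> \<noteq> 0" by (metis degree_eq_zeroE pCons_0_0)
  have C\<kappa>: "C = smult \<kappa> p" and D\<kappa>: "D = smult \<kappa> q" using Ct Dt \<kappa> by simp_all
  have c0: "c \<noteq> 0" using C\<kappa> \<kappa> p0 unfolding C_def by auto
  have d0: "d \<noteq> 0" using D\<kappa> \<kappa> q0 unfolding D_def by auto
  have dcs: "degree c \<le> s" "degree d \<le> s" using s by auto
  have degC: "degree p = degree c * r + (s - degree c) * rb"
    using degree_homg[OF dab b0 c0 dcs(1)] C\<kappa> \<kappa> unfolding C_def r_def rb_def by simp
  have degD: "degree q = degree d * r + (s - degree d) * rb"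
    using degree_homg[OF dab b0 d0 dcs(2)] D\<kappa> \<kappa> unfolding D_def r_def rb_def by simp
  have rrb: "rb < r" using dab unfolding r_def rb_def .
  have cd_lt: "degree d < degree c"
  proof (rule ccontr)
    assume "\<not> degree d < degree c"
    then have "degree c \<le> degree d" by simp
    then have "degree p \<le> degree q" using nat_mono_aux[OF _ dcs(2) rrb] degC degD by simp
    then show False using dpq by simp
  qed
  then have cs: "degree c = s" using s by simp
  define e where "e = degree d"
  have es: "e < s" using cd_lt cs e_def by simp
  have "degree p - degree q = (s - e) * (r - rb)"
    using degC degD cs nat_ident_aux[OF es rrb] unfolding e_def by simp
  then have X: "\<not> CHAR('a) dvd ((s - e) * (r - rb))" using tame by simp
  have "of_nat ((s - e) * (r - rb)) \<noteq> (0::'a)"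
    using X by (simp only: of_nat_eq_0_iff_char_dvd not_False_eq_True)
  then have m: "(of_nat (s - e) :: 'a) * of_nat (r - rb) \<noteq> 0" by (simp only: of_nat_mult not_False_eq_True)
  have ch1: "of_nat (s - e) \<noteq> (0::'a)" using m by (metis mult_zero_left)
  have ch2: "of_nat (r - rb) \<noteq> (0::'a)" using m by (metis mult_zero_right)
  define U where "U = Wr a b"
  define V where "V = Wr c d"
  have degU: "degree U = r + rb - 1"
    using Wr_degree(1)[OF dab b0] ch2 unfolding U_def r_def rb_def by simp
  have degV: "degree V = s + e - 1"
    using Wr_degree(1)[OF cd_lt d0] ch1 cs unfolding V_def e_def by simp
  have V0: "V \<noteq> 0" using degV s2 by auto
  have dV: "degree (Wr c d) \<le> 2 * s - 2" using degV es unfolding V_def by simp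
  define R where "R = homg (2 * s - 2) V a b"
  have WCD: "Wr C D = U * R"
    unfolding C_def D_def U_def R_def V_def
    by (rule wronski_homg[OF dcs a0 b0 _ dV]) (use s2 in simp)
  have degR: "degree R = (s + e - 1) * r + (2 * s - 2 - (s + e - 1)) * rb"
    using degree_homg[OF dab b0 V0] degV dV unfolding R_def r_def rb_def V_def by simp
  have UR: "degree U < degree R" using nat_final_aux[OF es rrb s2] degU degR by simp
  have U1: "degree U \<ge> 1" using degU a2 unfolding r_def by simp
  have U0: "U \<noteq> 0" using U1 by auto
  have R0: "R \<noteq> 0" using UR by auto
  define \<nu> where "\<nu> = \<kappa> * \<kappa>"
  have \<nu>0: "\<nu> \<noteq> 0" using \<kappa> unfolding \<nu>_def by simp
  have key: "[:\<nu>:] * Wr p q = U * R"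
    using WCD unfolding C\<kappa> D\<kappa> Wr_smult \<nu>_def by simp
  have unu: "is_unit [:\<nu>:]" using \<nu>0 by (simp add: is_unit_triv)
  from Whyp show False
  proof
    assume irr: "irreducible (Wr p q)"
    then have "irreducible (U * R)" using key irreducible_mult_unit_left[OF unu] by metis
    then have "is_unit U \<or> is_unit R" using irreducibleD by blast
    then show False using poly_unit_deg[of U] poly_unit_deg[of R] U1 UR by auto
  next
    assume "\<exists>h u. irreducible h \<and> is_unit u \<and> Wr p q = u * h ^ 2"
    then obtain h u where h: "irreducible h" and u: "is_unit u" and W: "Wr p q = u * h ^ 2" by blast
    define \<mu> where "\<mu> = [:\<nu>:] * u"
    have mu: "is_unit \<mu>" unfolding \<mu>_def using unu u by (rule unit_prod)
    have h0: "h \<noteq> 0" using h by auto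
    have eq2: "\<mu> * (h * h) = U * R" using key W unfolding \<mu>_def by (simp add: power2_eq_square algebra_simps)
    have "degree \<mu> = 0" "\<mu> \<noteq> 0" using poly_unit_deg[OF mu] by auto
    then have "degree U + degree R = 2 * degree h"
      using eq2 U0 R0 h0 by (metis degree_mult_eq mult_2 add_0 mult_eq_0_iff)
    then have Uh: "degree U < degree h" using UR by linarith
    have nU: "\<not> h dvd U" using dvd_imp_degree_le[OF _ U0] Uh by fastforce
    have "h dvd U * R" unfolding eq2[symmetric] by simp
    then have "h dvd R" using poly_irreducible_prime[OF h _ nU] by blast
    then obtain R1 where R1: "R = h * R1" by (auto simp: dvd_def)
    have "h * (\<mu> * h) = h * (U * R1)" using eq2 R1 by (simp add: algebra_simps)
    then have eq3: "\<mu> * h = U * R1" using h0 by simp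
    have "h dvd U * R1" unfolding eq3[symmetric] by simp
    then have "h dvd R1" using poly_irreducible_prime[OF h _ nU] by blast
    then obtain R2 where R2: "R1 = h * R2" by (auto simp: dvd_def)
    have "h * \<mu> = h * (U * R2)" using eq3 R2 by (simp add: algebra_simps)
    then have "\<mu> = U * R2" using h0 by simp
    then have "is_unit U" using mu dvd_unit_imp_unit by (metis dvd_triv_left)
    then show False using poly_unit_deg[of U] U1 by auto
  qed
qed



lemma div_div_cancel:
  fixes x z w :: "'b::field"
  assumes "z \<noteq> 0" shows "(x / z) / (w / z) = x / w"
  using assms by (cases "w = 0") (simp_all add: field_simps)

theorem mainTheorem9:
  fixes p q :: "'a::field poly"
  assumes "q \<noteq> 0" and "coprime p q"
    and "rf_deg p q \<ge> 1"
    and "rf_separable p q"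
    and "tame p q"
    and "degree p \<ge> degree q + 2"
    and "rsquarefree (map_poly (to_ac :: 'a \<Rightarrow> 'a alg_closure) q)"
    and "\<And>g. deriv_numerator p q g \<Longrightarrow>
           irreducible g \<or> (\<exists>h u. irreducible h \<and> is_unit u \<and> g = u * h ^ 2)"
  shows "\<not> (\<exists>a b c d :: 'a poly. b \<noteq> 0 \<and> coprime a b \<and> d \<noteq> 0 \<and> coprime c d \<and>
              rf_deg a b > 1 \<and> rf_deg c d > 1 \<and> rf p q = rf_comp c d a b)"
proof
  assume "\<exists>a b c d :: 'a poly. b \<noteq> 0 \<and> coprime a b \<and> d \<noteq> 0 \<and> coprime c d \<and>
              rf_deg a b > 1 \<and> rf_deg c d > 1 \<and> rf p q = rf_comp c d a b"
  then obtain a b c d :: "'a poly" where b0: "b \<noteq> 0" and ab: "coprime a b" and d0: "d \<noteq> 0"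
    and cd: "coprime c d" and r1: "rf_deg a b > 1" and s1: "rf_deg c d > 1"
    and eqf: "rf p q = rf_comp c d a b" by blast
  note q0 = assms(1) and pq = assms(2)
  define s where "s = max (degree c) (degree d)"
  have s2: "s \<ge> 2" using s1 unfolding s_def rf_deg_def by simp
  have dpq: "degree q < degree p" using assms(6) by simp
  have p0: "p \<noteq> 0" using dpq by auto
  define C where "C = homg s c a b"
  define D where "D = homg s d a b"
  have dcs: "degree c \<le> s" "degree d \<le> s" unfolding s_def by auto
  have eq: "p * D = q * C"
  proof -
    define y where "y = Fract a b"
    have bs: "to_fract b ^ s \<noteq> 0" using b0 by simp
    have hc: "peval c y = to_fract C / to_fract b ^ s"
      using homg_fract[OF dcs(1) b0, of a] bs unfolding C_def y_def by (simp add: field_simps)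
    have hd: "peval d y = to_fract D / to_fract b ^ s"
      using homg_fract[OF dcs(2) b0, of a] bs unfolding D_def y_def by (simp add: field_simps)
    have "rf_comp c d a b = (to_fract C / to_fract b ^ s) / (to_fract D / to_fract b ^ s)"
      unfolding rf_comp_def rf_def y_def[symmetric] hc hd ..
    also have "\<dots> = to_fract C / to_fract D"
      by (rule div_div_cancel[OF bs])
    finally have rc: "rf_comp c d a b = to_fract C / to_fract D" .
    have rp: "rf p q = to_fract p / to_fract q" using q0 by (simp add: rf_def to_fract_def)
    have "to_fract p / to_fract q = to_fract C / to_fract D"
      using eqf rc rp by simp
    moreover have "D \<noteq> 0"
    proof
      assume "D = 0"
      then have "to_fract p / to_fract q = 0" using \<open>to_fract p / to_fract q = to_fract C / to_fract D\<close> by simp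
      then show False using p0 q0 by simp
    qed
    ultimately have "to_fract p * to_fract D = to_fract C * to_fract q"
      using q0 by (simp add: field_simps)
    then have "p * D = C * q" by (metis to_fract_eq_iff to_fract_mult)
    then show ?thesis by (simp add: mult.commute)
  qed
  have CD: "coprime C D" unfolding C_def D_def using homg_coprime[OF cd s_def ab b0] .
  have tame: "\<not> CHAR('a) dvd (degree p - degree q)"
    using assms(5) dpq unfolding tame_def ram_inf_def by simp
  have Wq: "coprime (Wr p q) q"
    using coprime_Wr_q[OF pq sqfree_coprime_deriv[OF assms(7)]] .
  have "coprime (q ^ 2) (Wr p q)"
    using poly_coprime_power Wq by (metis coprime_commute)
  then have dn: "deriv_numerator p q (Wr p q)"
    unfolding deriv_numerator_def
    by (intro exI[of _ "q ^ 2"]) (simp add: q0 coprime_commute Wr_def mult.commute)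
  have Whyp: "irreducible (Wr p q) \<or> (\<exists>h u. irreducible h \<and> is_unit u \<and> Wr p q = u * h ^ 2)"
    using assms(8)[OF dn] .
  show False
  proof (cases "degree b < degree a")
    case True
    have a2: "degree a \<ge> 2" using r1 True unfolding rf_deg_def by simp
    show False using main_contra[OF q0 pq dpq tame Whyp b0 ab True a2 s_def s2]
      CD eq unfolding C_def D_def by blast
  next
    case False
    then have ale: "degree a \<le> degree b" by simp
    have b2: "degree b \<ge> 2" using r1 ale unfolding rf_deg_def by simp
    obtain a1 b1 c1 d1 where n: "b1 \<noteq> 0" "coprime a1 b1" "s = max (degree c1) (degree d1)"
      "degree b1 < degree a1" "degree a1 = degree b"
      "homg s c1 a1 b1 = homg s c a b" "homg s d1 a1 b1 = homg s d a b"
      using normalize_decomp[OF b0 ab cd s_def ale b2] by blast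
    have a2: "degree a1 \<ge> 2" using n(5) b2 by simp
    show False using main_contra[OF q0 pq dpq tame Whyp n(1) n(2) n(4) a2 n(3) s2]
      CD eq unfolding C_def D_def n(6) n(7) by blast
  qed
qed


end
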